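(* Let $G$ be a compact Lie group. If $G$ is not a BU-group of type I, then $G$ is not a BU-group of type II.
   Context: An orthogonal $G$-representation $V$ is fixed-point-free if $V^G=0$; $S(V)$ denotes its unit sphere, and a $G$-map is a continuous $G$-equivariant map. $G$ is a BU-group of type I if for all fixed-point-free orthogonal $G$-representations $V,W$, the existence of a $G$-map $f:S(V)\to S(W)$ implies $\dim V\le\dim W$. $G$ is a BU-group of type II if for all fixed-point-free orthogonal $G$-representations $V,W$ with $\dim V=\dim W$, every $G$-map $f:S(V)\to S(W)$ has $\deg f\neq 0$. *)

theory Defs
  imports "HOL-Analysis.Analysis" "HOL-Homology.Homology"
begin

text \<open>A compact Lie group, modelled as a compact subgroup of GL(N,R)
  (a compact linear group). Every compact subgroup of GL(N,R) is closed, hence a Lie group,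
  and every compact Lie group is isomorphic to one of these.\<close>
definition compact_matrix_group :: "(real^'n^'n) set \<Rightarrow> bool" where
  "compact_matrix_group G \<longleftrightarrow>
     compact G \<and> (\<forall>A\<in>G. invertible A) \<and> mat 1 \<in> G \<and>
     (\<forall>A\<in>G. \<forall>B\<in>G. A ** B \<in> G) \<and> (\<forall>A\<in>G. matrix_inv A \<in> G)"

text \<open>An n-dimensional orthogonal representation: a continuous homomorphism
  from G into O(n), given by matrix entries rho g i j (i, j < n).
  Vectors of R^n are functions nat => real vanishing outside {..<n}.\<close>
definition orth_rep :: "(real^'n^'n) set \<Rightarrow> nat \<Rightarrow> (real^'n^'n \<Rightarrow> nat \<Rightarrow> nat \<Rightarrow> real) \<Rightarrow> bool" where
  "orth_rep G n \<rho> \<longleftrightarrow>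
     (\<forall>i<n. \<forall>j<n. continuous_on G (\<lambda>g. \<rho> g i j)) \<and>
     (\<forall>g\<in>G. \<forall>h\<in>G. \<forall>i<n. \<forall>j<n. \<rho> (g ** h) i j = (\<Sum>k<n. \<rho> g i k * \<rho> h k j)) \<and>
     (\<forall>g\<in>G. \<forall>i<n. \<forall>j<n. (\<Sum>k<n. \<rho> g k i * \<rho> g k j) = (if i = j then 1 else 0))"

definition rep_act :: "nat \<Rightarrow> (real^'n^'n \<Rightarrow> nat \<Rightarrow> nat \<Rightarrow> real) \<Rightarrow> real^'n^'n \<Rightarrow> (nat \<Rightarrow> real) \<Rightarrow> (nat \<Rightarrow> real)" where
  "rep_act n \<rho> g x = (\<lambda>i. if i < n then (\<Sum>j<n. \<rho> g i j * x j) else 0)"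

definition vec_space :: "nat \<Rightarrow> (nat \<Rightarrow> real) set" where
  "vec_space n = {x. \<forall>i\<ge>n. x i = 0}"

definition fixed_point_free :: "(real^'n^'n) set \<Rightarrow> nat \<Rightarrow> (real^'n^'n \<Rightarrow> nat \<Rightarrow> nat \<Rightarrow> real) \<Rightarrow> bool" where
  "fixed_point_free G n \<rho> \<longleftrightarrow>
     (\<forall>x\<in>vec_space n. (\<forall>g\<in>G. rep_act n \<rho> g x = x) \<longrightarrow> x = (\<lambda>i. 0))"

definition usphere :: "nat \<Rightarrow> (nat \<Rightarrow> real) set" where
  "usphere n = {x. (\<Sum>i<n. x i ^ 2) = 1 \<and> (\<forall>i\<ge>n. x i = 0)}"

definition usphere_top :: "nat \<Rightarrow> (nat \<Rightarrow> real) topology" where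
  "usphere_top n = subtopology (powertop_real UNIV) (usphere n)"

definition G_map :: "(real^'n^'n) set \<Rightarrow> nat \<Rightarrow> (real^'n^'n \<Rightarrow> nat \<Rightarrow> nat \<Rightarrow> real)
     \<Rightarrow> nat \<Rightarrow> (real^'n^'n \<Rightarrow> nat \<Rightarrow> nat \<Rightarrow> real) \<Rightarrow> ((nat \<Rightarrow> real) \<Rightarrow> (nat \<Rightarrow> real)) \<Rightarrow> bool" where
  "G_map G n \<rho> m \<sigma> f \<longleftrightarrow>
     continuous_map (usphere_top n) (usphere_top m) f \<and>
     (\<forall>g\<in>G. \<forall>x\<in>usphere n. f (rep_act n \<rho> g x) = rep_act m \<sigma> g (f x))"

definition BU_type_I :: "(real^'n^'n) set \<Rightarrow> bool" where
  "BU_type_I G \<longleftrightarrow>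
     (\<forall>n m \<rho> \<sigma> f. orth_rep G n \<rho> \<and> fixed_point_free G n \<rho> \<and>
        orth_rep G m \<sigma> \<and> fixed_point_free G m \<sigma> \<and> G_map G n \<rho> m \<sigma> f \<longrightarrow> n \<le> m)"

text \<open>Degree of a map S^(n-1) -> S^(n-1) is the Brouwer degree (HOL-Homology);
  for n = 0 (empty sphere, reduced homology in degree -1) the degree is 1 by convention.\<close>
definition BU_type_II :: "(real^'n^'n) set \<Rightarrow> bool" where
  "BU_type_II G \<longleftrightarrow>
     (\<forall>n \<rho> \<sigma> f. orth_rep G n \<rho> \<and> fixed_point_free G n \<rho> \<and>
        orth_rep G n \<sigma> \<and> fixed_point_free G n \<sigma> \<and> G_map G n \<rho> n \<sigma> f \<longrightarrow>
        n = 0 \<or> Brouwer_degree2 (n - 1) f \<noteq> 0)"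

end

theory Submission
  imports Defs
begin

lemma sum_blocks:
  fixes h :: "nat \<Rightarrow> real"
  shows "(\<Sum>j<k*n. h j) = (\<Sum>q<k. \<Sum>r<n. h (q*n+r))"
proof -
  have "(\<Sum>j<k*n. h j) = (\<Sum>q<k. sum h {q*n..<q*n+n})"
    by (rule sum.nat_group[symmetric])
  also have "\<dots> = (\<Sum>q<k. \<Sum>r<n. h (q*n+r))"
  proof (rule sum.cong[OF refl])
    fix q
    have "sum h {0+q*n..<n+q*n} = (\<Sum>r=0..<n. h (r+q*n))"
      by (rule sum.shift_bounds_nat_ivl)
    then show "sum h {q*n..<q*n+n} = (\<Sum>r<n. h (q*n+r))"
      by (simp add: add.commute atLeast0LessThan)
  qed
  finally show ?thesis .
qed

lemma sum_block_sel:
  fixes H :: "nat \<Rightarrow> real"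
  assumes "q < k"
  shows "(\<Sum>j<k*n. if j div n = q then H j else 0) = (\<Sum>r<n. H (q*n+r))"
proof -
  have "(\<Sum>j<k*n. if j div n = q then H j else 0)
      = (\<Sum>p<k. \<Sum>r<n. if (p*n+r) div n = p \<and> p = q then H (p*n+r) else 0)"
    unfolding sum_blocks
    by (intro sum.cong refl) (auto simp: )
  also have "\<dots> = (\<Sum>p<k. if p = q then (\<Sum>r<n. H (p*n+r)) else 0)"
    by (intro sum.cong refl) auto
  also have "\<dots> = (\<Sum>r<n. H (q*n+r))"
    using assms by (simp add: sum.delta)
  finally show ?thesis .
qed

definition pw :: "nat \<Rightarrow> nat \<Rightarrow> ('g \<Rightarrow> nat \<Rightarrow> nat \<Rightarrow> real) \<Rightarrow> 'g \<Rightarrow> nat \<Rightarrow> nat \<Rightarrow> real" where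
  "pw n k \<rho> g i j = (if i < k*n \<and> j < k*n \<and> i div n = j div n then \<rho> g (i mod n) (j mod n) else 0)"

lemma pw_row:
  assumes "i < k*n"
  shows "(\<Sum>j<k*n. pw n k \<rho> g i j * x j) = (\<Sum>r<n. \<rho> g (i mod n) r * x ((i div n)*n + r))"
proof -
  have q: "i div n < k" using assms
    by (metis div_less_iff_less_mult mult.commute mult_zero_right not_less_zero zero_less_iff_neq_zero)
  have "(\<Sum>j<k*n. pw n k \<rho> g i j * x j) = (\<Sum>j<k*n. if j div n = i div n then \<rho> g (i mod n) (j mod n) * x j else 0)"
    using assms by (intro sum.cong refl) (auto simp: pw_def)
  also have "\<dots> = (\<Sum>r<n. \<rho> g (i mod n) (((i div n)*n + r) mod n) * x ((i div n)*n + r))"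
    by (rule sum_block_sel[OF q])
  also have "\<dots> = (\<Sum>r<n. \<rho> g (i mod n) r * x ((i div n)*n + r))"
    by (intro sum.cong refl) auto
  finally show ?thesis .
qed

lemma pw_col:
  assumes "j < k*n"
  shows "(\<Sum>i<k*n. x i * pw n k \<rho> g i j) = (\<Sum>r<n. x ((j div n)*n + r) * \<rho> g r (j mod n))"
proof -
  have q: "j div n < k" using assms
    by (metis div_less_iff_less_mult mult.commute mult_zero_right not_less_zero zero_less_iff_neq_zero)
  have "(\<Sum>i<k*n. x i * pw n k \<rho> g i j) = (\<Sum>i<k*n. if i div n = j div n then x i * \<rho> g (i mod n) (j mod n) else 0)"
    using assms by (intro sum.cong refl) (auto simp: pw_def)
  also have "\<dots> = (\<Sum>r<n. x ((j div n)*n + r) * \<rho> g (((j div n)*n + r) mod n) (j mod n))"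
    by (rule sum_block_sel[OF q])
  also have "\<dots> = (\<Sum>r<n. x ((j div n)*n + r) * \<rho> g r (j mod n))"
    by (intro sum.cong refl) auto
  finally show ?thesis .
qed

lemma blk_lt: "q < k \<Longrightarrow> r < n \<Longrightarrow> q*n + r < k*(n::nat)"
proof -
  assume a: "q < k" "r < n"
  have "q*n + r < q*n + n" using a by simp
  also have "\<dots> = Suc q * n" by simp
  also have "\<dots> \<le> k*n" using a(1) by (intro mult_le_mono1) simp
  finally show ?thesis .
qed

lemma divk: "i < k*n \<Longrightarrow> i div n < (k::nat)"
  by (metis div_less_iff_less_mult mult.commute mult_zero_right not_less_zero zero_less_iff_neq_zero)

lemma modn: "i < k*n \<Longrightarrow> i mod n < (n::nat)"
  by (metis mod_less_divisor mult_zero_right not_less_zero zero_less_iff_neq_zero)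

lemma pw_at: "q < k \<Longrightarrow> r < n \<Longrightarrow> j < k*n \<Longrightarrow>
   pw n k \<rho> g (q*n+r) j = (if q = j div n then \<rho> g r (j mod n) else 0)"
  using blk_lt[of q k r n] by (auto simp: pw_def)

lemma pw_at2: "q < k \<Longrightarrow> r < n \<Longrightarrow> j < k*n \<Longrightarrow>
   pw n k \<rho> g j (q*n+r) = (if q = j div n then \<rho> g (j mod n) r else 0)"
  using blk_lt[of q k r n] by (auto simp: pw_def)

lemma orth_rep_pw:
  assumes "orth_rep G n \<rho>"
  shows "orth_rep G (k*n) (pw n k \<rho>)"
  unfolding orth_rep_def
proof (intro conjI ballI allI impI)
  fix i j assume ij: "i < k*n" "j < k*n"
  show "continuous_on G (\<lambda>g. pw n k \<rho> g i j)"
  proof (cases "i div n = j div n")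
    case True
    then have "(\<lambda>g. pw n k \<rho> g i j) = (\<lambda>g. \<rho> g (i mod n) (j mod n))"
      using ij by (auto simp: pw_def)
    moreover have "continuous_on G (\<lambda>g. \<rho> g (i mod n) (j mod n))"
      using assms modn[OF ij(1)] modn[OF ij(2)] by (simp add: orth_rep_def)
    ultimately show ?thesis by metis
  next
    case False
    then have "(\<lambda>g. pw n k \<rho> g i j) = (\<lambda>g. 0)"
      using ij by (auto simp: pw_def)
    then show ?thesis by (metis continuous_on_const)
  qed
next
  fix g h i j assume gh: "g \<in> G" "h \<in> G" and ij: "i < k*n" "j < k*n"
  have "(\<Sum>l<k*n. pw n k \<rho> g i l * pw n k \<rho> h l j)
      = (\<Sum>r<n. \<rho> g (i mod n) r * pw n k \<rho> h ((i div n)*n + r) j)"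
    by (rule pw_row[OF ij(1)])
  also have "\<dots> = (\<Sum>r<n. \<rho> g (i mod n) r * (if i div n = j div n then \<rho> h r (j mod n) else 0))"
    by (intro sum.cong refl) (simp add: pw_at[OF divk[OF ij(1)] _ ij(2)])
  also have "\<dots> = pw n k \<rho> (g ** h) i j"
  proof (cases "i div n = j div n")
    case True
    then show ?thesis using assms gh ij modn[OF ij(1)] modn[OF ij(2)]
      by (simp add: pw_def orth_rep_def)
  next
    case False
    then show ?thesis by (simp add: pw_def)
  qed
  finally show "pw n k \<rho> (g ** h) i j = (\<Sum>l<k*n. pw n k \<rho> g i l * pw n k \<rho> h l j)" by simp
next
  fix g i j assume g: "g \<in> G" and ij: "i < k*n" "j < k*n"
  have "(\<Sum>l<k*n. pw n k \<rho> g l i * pw n k \<rho> g l j)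
      = (\<Sum>r<n. pw n k \<rho> g ((j div n)*n + r) i * \<rho> g r (j mod n))"
    by (rule pw_col[OF ij(2)])
  also have "\<dots> = (\<Sum>r<n. (if j div n = i div n then \<rho> g r (i mod n) else 0) * \<rho> g r (j mod n))"
    by (intro sum.cong refl) (simp add: pw_at[OF divk[OF ij(2)] _ ij(1)])
  also have "\<dots> = (if i = j then 1 else 0)"
  proof (cases "i div n = j div n")
    case True
    have "(i = j) = (i mod n = j mod n)" using True
      by (metis div_mult_mod_eq)
    then show ?thesis using True assms g ij modn[OF ij(1)] modn[OF ij(2)]
      by (simp add: orth_rep_def)
  next
    case False
    then show ?thesis by auto
  qed
  finally show "(\<Sum>l<k*n. pw n k \<rho> g l i * pw n k \<rho> g l j) = (if i = j then 1 else 0)" .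
qed

definition blk :: "nat \<Rightarrow> nat \<Rightarrow> (nat \<Rightarrow> real) \<Rightarrow> nat \<Rightarrow> real" where
  "blk n q x = (\<lambda>r. if r < n then x (q*n+r) else 0)"

lemma rep_act_pw_blk:
  assumes "q < k"
  shows "blk n q (rep_act (k*n) (pw n k \<rho>) g x) = rep_act n \<rho> g (blk n q x)"
proof
  fix r
  show "blk n q (rep_act (k*n) (pw n k \<rho>) g x) r = rep_act n \<rho> g (blk n q x) r"
  proof (cases "r < n")
    case True
    have lt: "q*n + r < k*n" using blk_lt[OF assms True] .
    have d: "(q*n+r) div n = q" "(q*n+r) mod n = r" using True by auto
    show ?thesis using True lt
      by (simp add: blk_def rep_act_def pw_row d)
  qed (simp add: blk_def rep_act_def)
qed

lemma fpf_pw: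
  assumes "fixed_point_free G n \<rho>"
  shows "fixed_point_free G (k*n) (pw n k \<rho>)"
  unfolding fixed_point_free_def
proof (intro ballI impI)
  fix x assume x: "x \<in> vec_space (k*n)" and fx: "\<forall>g\<in>G. rep_act (k * n) (pw n k \<rho>) g x = x"
  have b0: "blk n q x = (\<lambda>i. 0)" if q: "q < k" for q
  proof -
    have "blk n q x \<in> vec_space n" by (simp add: blk_def vec_space_def)
    moreover have "\<forall>g\<in>G. rep_act n \<rho> g (blk n q x) = blk n q x"
      using fx rep_act_pw_blk[OF q] by metis
    ultimately show ?thesis using assms unfolding fixed_point_free_def by blast
  qed
  show "x = (\<lambda>i. 0)"
  proof
    fix i
    show "x i = 0"
    proof (cases "i < k*n")
      case True
      have "blk n (i div n) x (i mod n) = 0" using b0[OF divk[OF True]] by simp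
      then show ?thesis using modn[OF True] by (simp add: blk_def)
    next
      case False
      then show ?thesis using x by (simp add: vec_space_def)
    qed
  qed
qed

lemma usphere_top_eq: "usphere_top n = top_of_set (usphere n)"
  unfolding usphere_top_def euclidean_product_topology ..

lemma cmap_usphere:
  "continuous_map (usphere_top n) (usphere_top m) f \<longleftrightarrow>
     continuous_on (usphere n) f \<and> f ` usphere n \<subseteq> usphere m"
  unfolding usphere_top_eq
  by (simp add: continuous_map_in_subtopology image_subset_iff_funcset)

lemma rep_act_norm:
  assumes "orth_rep G n \<rho>" "g \<in> G"
  shows "(\<Sum>r<n. (rep_act n \<rho> g v r)^2) = (\<Sum>r<n. (v r)^2)"
proof -
  have o: "\<And>s t. s < n \<Longrightarrow> t < n \<Longrightarrow> (\<Sum>r<n. \<rho> g r s * \<rho> g r t) = (if s = t then 1 else 0)"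
    using assms by (auto simp: orth_rep_def)
  have "(\<Sum>r<n. (rep_act n \<rho> g v r)^2) = (\<Sum>r<n. (\<Sum>s<n. \<rho> g r s * v s) * (\<Sum>t<n. \<rho> g r t * v t))"
    by (simp add: rep_act_def power2_eq_square)
  also have "\<dots> = (\<Sum>r<n. \<Sum>s<n. \<Sum>t<n. v s * v t * (\<rho> g r s * \<rho> g r t))"
    by (simp add: sum_product algebra_simps)
  also have "\<dots> = (\<Sum>s<n. \<Sum>r<n. \<Sum>t<n. v s * v t * (\<rho> g r s * \<rho> g r t))"
    by (rule sum.swap[where g="\<lambda>r s. \<Sum>t<n. v s * v t * (\<rho> g r s * \<rho> g r t)"])
  also have "\<dots> = (\<Sum>s<n. \<Sum>t<n. \<Sum>r<n. v s * v t * (\<rho> g r s * \<rho> g r t))"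
    by (rule sum.cong[OF refl], rule sum.swap)
  also have "\<dots> = (\<Sum>s<n. \<Sum>t<n. v s * v t * (\<Sum>r<n. \<rho> g r s * \<rho> g r t))"
    by (simp add: sum_distrib_left)
  also have "\<dots> = (\<Sum>s<n. \<Sum>t<n. if s = t then v s * v t else 0)"
    by (intro sum.cong refl) (simp add: o)
  also have "\<dots> = (\<Sum>r<n. (v r)^2)"
    by (simp add: power2_eq_square)
  finally show ?thesis .
qed

lemma cont_scale:
  fixes t \<psi> :: "'a::metric_space \<Rightarrow> real"
  assumes ct: "continuous_on S t" and cp: "continuous_on {x\<in>S. t x \<noteq> 0} \<psi>"
    and b: "\<And>x. x \<in> S \<Longrightarrow> t x \<noteq> 0 \<Longrightarrow> \<bar>\<psi> x\<bar> \<le> 1"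
  shows "continuous_on S (\<lambda>x. t x * \<psi> x)"
  unfolding continuous_on_iff
proof (intro ballI allI impI)
  fix a e assume a: "a \<in> S" and e: "(0::real) < e"
  have le: "\<bar>t x * \<psi> x\<bar> \<le> \<bar>t x\<bar>" if "x \<in> S" for x
  proof (cases "t x = 0")
    case False
    then show ?thesis using b[OF that False] by (simp add: abs_mult mult_left_le)
  qed simp
  show "\<exists>d>0. \<forall>x'\<in>S. dist x' a < d \<longrightarrow> dist (t x' * \<psi> x') (t a * \<psi> a) < e"
  proof (cases "t a = 0")
    case True
    obtain d where d: "d > 0" "\<forall>x'\<in>S. dist x' a < d \<longrightarrow> dist (t x') (t a) < e"
      using ct a e unfolding continuous_on_iff by blast
    show ?thesis
    proof (intro exI conjI ballI impI)
      fix x' assume "x' \<in> S" "dist x' a < d"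
      then have "\<bar>t x'\<bar> < e" using d True by (simp add: dist_real_def)
      then show "dist (t x' * \<psi> x') (t a * \<psi> a) < e"
        using le[OF \<open>x' \<in> S\<close>] True by (simp add: dist_real_def)
    qed (rule d)
  next
    case False
    have "continuous_on {x\<in>S. t x \<noteq> 0} (\<lambda>x. t x * \<psi> x)"
      by (intro continuous_on_mult cp continuous_on_subset[OF ct]) auto
    then obtain d1 where d1: "d1 > 0" "\<forall>x'\<in>{x\<in>S. t x \<noteq> 0}. dist x' a < d1 \<longrightarrow> dist (t x' * \<psi> x') (t a * \<psi> a) < e"
      using a False e unfolding continuous_on_iff by blast
    obtain d2 where d2: "d2 > 0" "\<forall>x'\<in>S. dist x' a < d2 \<longrightarrow> dist (t x') (t a) < \<bar>t a\<bar>"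
      using ct a False unfolding continuous_on_iff by (meson zero_less_abs_iff)
    show ?thesis
    proof (intro exI conjI ballI impI)
      show "min d1 d2 > 0" using d1 d2 by simp
      fix x' assume x': "x' \<in> S" "dist x' a < min d1 d2"
      then have "t x' \<noteq> 0" using d2 by (auto simp: dist_real_def)
      then show "dist (t x' * \<psi> x') (t a * \<psi> a) < e" using d1 x' by auto
    qed
  qed
qed

definition nrm :: "nat \<Rightarrow> (nat \<Rightarrow> real) \<Rightarrow> real" where
  "nrm n v = sqrt (\<Sum>r<n. (v r)^2)"

definition unitv :: "nat \<Rightarrow> (nat \<Rightarrow> real) \<Rightarrow> nat \<Rightarrow> real" where
  "unitv n v = (\<lambda>r. v r / nrm n v)"

definition Fmap :: "nat \<Rightarrow> nat \<Rightarrow> ((nat\<Rightarrow>real)\<Rightarrow>(nat\<Rightarrow>real)) \<Rightarrow> (nat\<Rightarrow>real) \<Rightarrow> (nat\<Rightarrow>real)" where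
  "Fmap n m f x = (\<lambda>i. if i < m*m then nrm n (blk n (i div m) x) * f (unitv n (blk n (i div m) x)) (i mod m) else 0)"

lemma nrm_sq: "(nrm n v)^2 = (\<Sum>r<n. (v r)^2)"
  unfolding nrm_def by (simp add: sum_nonneg)

lemma nrm_nonneg: "nrm n v \<ge> 0"
  unfolding nrm_def by (simp add: sum_nonneg)

lemma unitv_sphere:
  assumes "nrm n v \<noteq> 0" "\<forall>r\<ge>n. v r = 0"
  shows "unitv n v \<in> usphere n"
proof -
  have "(\<Sum>r<n. (unitv n v r)^2) = (\<Sum>r<n. (v r)^2) / (nrm n v)^2"
    by (simp add: unitv_def power_divide sum_divide_distrib)
  also have "\<dots> = 1" using assms(1) by (simp add: nrm_sq[symmetric])
  finally show ?thesis using assms(2) by (simp add: usphere_def unitv_def)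
qed

lemma blk_zero: "\<forall>r\<ge>n. blk n q x r = 0"
  by (simp add: blk_def)

lemma nrm_blk: "nrm n (blk n q x) = sqrt (\<Sum>r<n. (x (q*n+r))^2)"
  unfolding nrm_def blk_def by (intro arg_cong[where f=sqrt] sum.cong) auto

lemma sphere_coord_bound:
  assumes "y \<in> usphere m"
  shows "\<bar>y r\<bar> \<le> 1"
proof (cases "r < m")
  case True
  have "(y r)^2 \<le> (\<Sum>s<m. (y s)^2)"
    using True by (intro member_le_sum) auto
  also have "\<dots> = 1" using assms by (simp add: usphere_def)
  finally show ?thesis by (simp add: abs_square_le_1)
next
  case False
  then show ?thesis using assms by (simp add: usphere_def)
qed

lemma cproj: "continuous_on S (\<lambda>x::nat\<Rightarrow>real. x j)"
  by (rule continuous_on_subset[OF continuous_on_product_coordinates]) simp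

lemma cont_nrm_blk: "continuous_on S (\<lambda>x. nrm n (blk n q x))"
  unfolding nrm_blk by (intro continuous_intros cproj)

lemma cont_blk: "continuous_on S (\<lambda>x. blk n q x r)"
  unfolding blk_def by (cases "r < n") (simp_all add: cproj)

lemma Fmap_cont:
  assumes cf: "continuous_on (usphere n) f" and fim: "f ` usphere n \<subseteq> usphere m"
  shows "continuous_on S (Fmap n m f)"
  unfolding Fmap_def
proof (intro continuous_on_coordinatewise_then_product)
  fix i
  show "continuous_on S (\<lambda>x. if i < m * m then nrm n (blk n (i div m) x) * f (unitv n (blk n (i div m) x)) (i mod m) else 0)"
  proof (cases "i < m*m")
    case True
    let ?q = "i div m"
    have "continuous_on S (\<lambda>x. nrm n (blk n ?q x) * f (unitv n (blk n ?q x)) (i mod m))"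
    proof (rule cont_scale[OF cont_nrm_blk])
      let ?S = "{x \<in> S. nrm n (blk n ?q x) \<noteq> 0}"
      have cu: "continuous_on ?S (\<lambda>x. unitv n (blk n ?q x))"
        unfolding unitv_def
        by (intro continuous_on_coordinatewise_then_product continuous_on_divide cont_blk cont_nrm_blk) auto
      have "continuous_on ?S (\<lambda>x. f (unitv n (blk n ?q x)))"
        by (rule continuous_on_compose2[OF cf cu]) (auto intro!: unitv_sphere simp: blk_def)
      then show "continuous_on ?S (\<lambda>x. f (unitv n (blk n ?q x)) (i mod m))"
        by (rule continuous_on_product_then_coordinatewise)
      fix x assume "x \<in> S" "nrm n (blk n ?q x) \<noteq> 0"
      then have "unitv n (blk n ?q x) \<in> usphere n" by (intro unitv_sphere blk_zero)
      then show "\<bar>f (unitv n (blk n ?q x)) (i mod m)\<bar> \<le> 1"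
        using fim by (intro sphere_coord_bound) auto
    qed
    then show ?thesis using True by simp
  qed simp
qed

lemma Fmap_blk:
  assumes "q < m" "r < m"
  shows "Fmap n m f x (q*m+r) = nrm n (blk n q x) * f (unitv n (blk n q x)) r"
proof -
  have "q*m + r < m*m" using blk_lt[OF assms] .
  moreover have "(q*m+r) div m = q" "(q*m+r) mod m = r" using assms by auto
  ultimately show ?thesis by (simp add: Fmap_def)
qed

lemma Fmap_high:
  assumes "m \<le> q" 
  shows "Fmap n m f x (q*m+r) = 0"
proof -
  have "m*m \<le> q*m" using assms by (simp add: mult_le_mono1)
  then have "\<not> q*m + r < m*m" by linarith
  then show ?thesis by (simp add: Fmap_def)
qed

lemma Fmap_sphere:
  assumes fim: "f ` usphere n \<subseteq> usphere m" and mn: "m \<le> n" and x: "x \<in> usphere (m*n)"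
  shows "Fmap n m f x \<in> usphere (n*m)"
proof -
  let ?t = "\<lambda>q. nrm n (blk n q x)"
  have inner: "(\<Sum>r<m. (Fmap n m f x (q*m+r))^2) = (if q < m then (?t q)^2 else 0)" for q
  proof (cases "q < m")
    case True
    have "(\<Sum>r<m. (Fmap n m f x (q*m+r))^2) = (\<Sum>r<m. (?t q)^2 * (f (unitv n (blk n q x)) r)^2)"
      using True by (intro sum.cong refl) (simp add: Fmap_blk power_mult_distrib)
    also have "\<dots> = (?t q)^2 * (\<Sum>r<m. (f (unitv n (blk n q x)) r)^2)"
      by (simp add: sum_distrib_left)
    also have "\<dots> = (?t q)^2"
    proof (cases "?t q = 0")
      case False
      then have "unitv n (blk n q x) \<in> usphere n" by (intro unitv_sphere) (auto simp: blk_def)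
      then have "f (unitv n (blk n q x)) \<in> usphere m" using fim by auto
      then show ?thesis by (simp add: usphere_def)
    qed simp
    finally show ?thesis using True by simp
  next
    case False
    then show ?thesis by (simp add: Fmap_high)
  qed
  have "(\<Sum>i<n*m. (Fmap n m f x i)^2) = (\<Sum>q<n. \<Sum>r<m. (Fmap n m f x (q*m+r))^2)"
    by (rule sum_blocks)
  also have "\<dots> = (\<Sum>q<n. if q < m then (?t q)^2 else 0)"
    by (simp add: inner)
  also have "\<dots> = (\<Sum>q\<in>{..<n} \<inter> {q. q < m}. (?t q)^2)"
    by (simp add: sum.If_cases)
  also have "{..<n} \<inter> {q. q < m} = {..<m}" using mn by auto
  also have "(\<Sum>q<m. (?t q)^2) = (\<Sum>q<m. \<Sum>r<n. (x (q*n+r))^2)"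
    by (simp add: nrm_blk sum_nonneg)
  also have "\<dots> = (\<Sum>i<m*n. (x i)^2)"
    by (rule sum_blocks[symmetric])
  also have "\<dots> = 1" using x by (simp add: usphere_def)
  finally have s: "(\<Sum>i<n*m. (Fmap n m f x i)^2) = 1" .
  have "\<forall>i\<ge>n*m. Fmap n m f x i = 0"
  proof (intro allI impI)
    fix i assume "n*m \<le> i"
    moreover have "m*m \<le> n*m" using mn by (simp add: mult_le_mono1)
    ultimately have "\<not> i < m*m" by linarith
    then show "Fmap n m f x i = 0" by (simp add: Fmap_def)
  qed
  with s show ?thesis by (simp add: usphere_def)
qed

lemma nrm_rep_act:
  assumes "orth_rep G n \<rho>" "g \<in> G"
  shows "nrm n (rep_act n \<rho> g v) = nrm n v"
  unfolding nrm_def using rep_act_norm[OF assms] by simp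

lemma unitv_rep_act: "unitv n (rep_act n \<rho> g v) = rep_act n \<rho> g (unitv n v)" if "nrm n (rep_act n \<rho> g v) = nrm n v"
  using that by (auto simp: unitv_def rep_act_def sum_divide_distrib fun_eq_iff)

lemma Fmap_equiv:
  assumes r: "orth_rep G n \<rho>" and s: "orth_rep G m \<sigma>" and g: "g \<in> G"
    and feq: "\<forall>y\<in>usphere n. f (rep_act n \<rho> g y) = rep_act m \<sigma> g (f y)"
    and mn: "m \<le> n"
  shows "Fmap n m f (rep_act (m*n) (pw n m \<rho>) g x) = rep_act (n*m) (pw m n \<sigma>) g (Fmap n m f x)"
proof
  fix i
  let ?y = "rep_act (m*n) (pw n m \<rho>) g x"
  have mm: "m*m \<le> n*m" using mn by (simp add: mult_le_mono1)
  show "Fmap n m f ?y i = rep_act (n*m) (pw m n \<sigma>) g (Fmap n m f x) i"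
  proof (cases "i < m*m")
    case True
    define q where "q = i div m"
    have q: "q < m" using divk[OF True] q_def by simp
    have r0: "i mod m < m" using modn[OF True] .
    have iq: "i = q*m + i mod m" by (simp add: q_def)
    have ilt: "i < n*m" by (rule less_le_trans[OF True mm])
    let ?v = "blk n q x"
    let ?t = "nrm n ?v"
    have hby: "blk n q ?y = rep_act n \<rho> g ?v" by (rule rep_act_pw_blk[OF q])
    have nt: "nrm n (rep_act n \<rho> g ?v) = ?t" by (rule nrm_rep_act[OF r g])
    have L: "Fmap n m f ?y i = ?t * f (rep_act n \<rho> g (unitv n ?v)) (i mod m)"
      using True by (simp add: Fmap_def q_def[symmetric] hby nt unitv_rep_act[OF nt])
    have R: "rep_act (n*m) (pw m n \<sigma>) g (Fmap n m f x) i
        = (\<Sum>s<m. \<sigma> g (i mod m) s * (?t * f (unitv n ?v) s))"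
      using ilt by (simp add: rep_act_def pw_row q_def[symmetric] Fmap_blk[OF q])
    show ?thesis
    proof (cases "?t = 0")
      case True
      then show ?thesis using L R by simp
    next
      case False
      then have "unitv n ?v \<in> usphere n" by (intro unitv_sphere) (auto simp: blk_def)
      then have "f (rep_act n \<rho> g (unitv n ?v)) = rep_act m \<sigma> g (f (unitv n ?v))" using feq by blast
      then show ?thesis using L R r0
        by (simp add: rep_act_def sum_distrib_left algebra_simps)
    qed
  next
    case False
    then have L: "Fmap n m f ?y i = 0" by (simp add: Fmap_def)
    show ?thesis
    proof (cases "i < n*m")
      case True
      have "m \<le> i div m" using False
        by (metis div_less_iff_less_mult le_less_linear mult_zero_right not_less_zero zero_less_iff_neq_zero)
      then show ?thesis using True L by (simp add: rep_act_def pw_row Fmap_high)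
    next
      case False
      then show ?thesis using L by (simp add: rep_act_def)
    qed
  qed
qed

lemma Fmap_last:
  assumes "m < n" "0 < m"
  shows "Fmap n m f x (n*m - 1) = 0"
proof -
  have "m*m + m \<le> n*m" using assms by (metis Suc_leI mult_Suc mult_le_mono1 add.commute)
  then have "m*m \<le> n*m - 1" using assms by simp
  then show ?thesis by (simp add: Fmap_def)
qed

lemma nsphere_usphere:
  assumes "0 < N"
  shows "nsphere (N-1) = usphere_top N"
proof -
  have "{x. (\<Sum>i\<le>N-1. x i ^ 2) = 1 \<and> (\<forall>i>N-1. x i = 0)} = usphere N"
  proof -
    have "{..N-1} = {..<N}" using assms by auto
    moreover have "\<And>i. (i > N-1) = (i \<ge> N)" using assms by auto
    ultimately show ?thesis by (simp add: usphere_def)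
  qed
  then show ?thesis by (simp add: nsphere usphere_top_def)
qed

lemma topspace_usphere_top: "topspace (usphere_top N) = usphere N"
  by (simp add: usphere_top_def)

lemma unit_in_usphere: "j < N \<Longrightarrow> (\<lambda>i. if i = j then 1 else 0) \<in> usphere N"
  by (simp add: usphere_def if_distrib[where f="\<lambda>x. x^2"] cong: if_cong)

theorem proposition3p1:
  fixes G :: "(real^'n^'n) set"
  assumes "compact_matrix_group G"
    and "\<not> BU_type_I G"
  shows "\<not> BU_type_II G"
proof -
  obtain n m \<rho> \<sigma> f where r: "orth_rep G n \<rho>" and fr: "fixed_point_free G n \<rho>"
    and s: "orth_rep G m \<sigma>" and fs: "fixed_point_free G m \<sigma>" and gm: "G_map G n \<rho> m \<sigma> f"
    and nm: "\<not> n \<le> m"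
    using assms(2) unfolding BU_type_I_def by blast
  have cf: "continuous_on (usphere n) f" and fim: "f ` usphere n \<subseteq> usphere m"
    and feq: "\<forall>g\<in>G. \<forall>x\<in>usphere n. f (rep_act n \<rho> g x) = rep_act m \<sigma> g (f x)"
    using gm by (auto simp: G_map_def cmap_usphere)
  have m0: "0 < m"
  proof (rule ccontr)
    assume "\<not> 0 < m"
    then have "m = 0" by simp
    have "(\<lambda>i. if i = 0 then 1 else 0) \<in> usphere n" using nm by (intro unit_in_usphere) simp
    then have "f (\<lambda>i. if i = 0 then 1 else (0::real)) \<in> usphere 0" using fim \<open>m = 0\<close> by auto
    then show False by (simp add: usphere_def)
  qed
  define N where "N = m*n"
  have N0: "0 < N" using m0 nm by (simp add: N_def)
  have NN: "n*m = N" by (simp add: N_def)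
  define F where "F = Fmap n m f"
  have r': "orth_rep G N (pw n m \<rho>)" using orth_rep_pw[OF r, of m] by (simp add: N_def)
  have s': "orth_rep G N (pw m n \<sigma>)" using orth_rep_pw[OF s, of n] by (simp add: NN)
  have fr': "fixed_point_free G N (pw n m \<rho>)" using fpf_pw[OF fr, of m] by (simp add: N_def)
  have fs': "fixed_point_free G N (pw m n \<sigma>)" using fpf_pw[OF fs, of n] by (simp add: NN)
  have mn: "m \<le> n" using nm by simp
  have Fim: "F ` usphere N \<subseteq> usphere N"
    using Fmap_sphere[OF fim mn] by (auto simp: F_def N_def mult.commute)
  have Fc: "continuous_on (usphere N) F" unfolding F_def by (rule Fmap_cont[OF cf fim])
  have cm: "continuous_map (usphere_top N) (usphere_top N) F"
    using Fim Fc by (simp add: cmap_usphere)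
  have Feq: "\<forall>g\<in>G. \<forall>x\<in>usphere N. F (rep_act N (pw n m \<rho>) g x) = rep_act N (pw m n \<sigma>) g (F x)"
  proof (intro ballI)
    fix g x assume g: "g \<in> G" and x: "x \<in> usphere N"
    have "\<forall>y\<in>usphere n. f (rep_act n \<rho> g y) = rep_act m \<sigma> g (f y)" using feq g by blast
    from Fmap_equiv[OF r s g this mn, of x]
    show "F (rep_act N (pw n m \<rho>) g x) = rep_act N (pw m n \<sigma>) g (F x)"
      by (simp add: F_def N_def mult.commute)
  qed
  have gmF: "G_map G N (pw n m \<rho>) N (pw m n \<sigma>) F"
    unfolding G_map_def using cm Feq by blast
  have cm2: "continuous_map (nsphere (N-1)) (nsphere (N-1)) F"
    using cm nsphere_usphere[OF N0] by simp
  have notin: "(\<lambda>i. if i = N-1 then 1 else (0::real)) \<notin> F ` topspace (nsphere (N-1))"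
  proof
    assume "(\<lambda>i. if i = N-1 then 1 else (0::real)) \<in> F ` topspace (nsphere (N-1))"
    then obtain x where "F x = (\<lambda>i. if i = N-1 then 1 else (0::real))" by auto
    then have "F x (N-1) = 1" by simp
    moreover have "F x (N-1) = 0" using Fmap_last[OF _ m0, of n f x] nm by (simp add: F_def NN)
    ultimately show False by simp
  qed
  have "(\<lambda>i. if i = N-1 then 1 else (0::real)) \<in> topspace (nsphere (N-1))"
    using nsphere_usphere[OF N0] unit_in_usphere[of "N-1" N] N0 by (simp add: topspace_usphere_top)
  then have "F ` topspace (nsphere (N-1)) \<noteq> topspace (nsphere (N-1))" using notin by blast
  then have deg: "Brouwer_degree2 (N-1) F = 0"
    by (rule Brouwer_degree2_nonsurjective[OF cm2])
  show ?thesis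
    unfolding BU_type_II_def using r' s' fr' fs' gmF deg N0 by auto
qed

end
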